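(* Let $U:\mathbb{R}^d\to\mathbb{R}$ satisfy: (A1) $U$ is continuously differentiable and $\|\nabla U(x)-\nabla U(y)\|_2\le L\|x-y\|_2$ for all $x,y$, for some $L>0$; (A2) $\nabla U(0)=0$; (A3) there exist $m,R>0$ such that for all $x,y\in\mathbb{R}^d$ with $\|x-y\|_2>R$, $\langle\nabla U(x)-\nabla U(y),x-y\rangle\ge m\|x-y\|_2^2$. Let $p^*$ be the probability measure with density proportional to $\exp(-U(x))$. Then $$\mathbb{E}_{x\sim p^*}\big[\|x\|_2^2\big]\le\frac{2d}m+18R^2.$$ *)

theory Defs
  imports "HOL-Analysis.Analysis" "HOL-Probability.Probability"
begin

definition gibbs :: "('a::euclidean_space \<Rightarrow> real) \<Rightarrow> 'a measure" where
  "gibbs U = density lborel (\<lambda>x. ennreal (exp (- U x) / (\<integral>y. exp (- U y) \<partial>lborel)))"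

end

theory Submission
  imports Defs
begin

lemma nn_integral_scale:
  fixes g :: "'a::euclidean_space \<Rightarrow> ennreal"
  assumes [measurable]: "g \<in> borel_measurable borel" and c: "c \<noteq> 0"
  shows "(\<integral>\<^sup>+x. g x \<partial>lborel) = ennreal (\<bar>c\<bar>^DIM('a)) * (\<integral>\<^sup>+x. g (c *\<^sub>R x) \<partial>lborel)"
  by (subst lborel_affine[OF c, of 0]) (simp add: nn_integral_density nn_integral_distr nn_integral_cmult)

lemma ray_bound:
  fixes U :: "'a::euclidean_space \<Rightarrow> real" and G :: "'a \<Rightarrow> 'a"
  assumes grad: "\<And>x. (U has_derivative (\<lambda>h. G x \<bullet> h)) (at x)"
    and G0: "G 0 = 0" and R_pos: "R > 0"
    and convex_outside: "\<And>x y. norm (x - y) > R \<Longrightarrow>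
                 (G x - G y) \<bullet> (x - y) \<ge> m * (norm (x - y))^2"
    and t: "0 < t" "t < 1" and x: "R \<le> t * norm x"
  shows "U (t *\<^sub>R x) + m * (1 - t^2) / 2 * (norm x)^2 \<le> U x"
proof -
  define h where "h s = U (s *\<^sub>R x) - m * s^2 * (norm x)^2 / 2" for s
  have der: "(h has_real_derivative (G (s *\<^sub>R x) \<bullet> x - m * s * (norm x)^2)) (at s)" for s
  proof -
    have "((\<lambda>s. U (s *\<^sub>R x)) has_derivative (\<lambda>k. G (s *\<^sub>R x) \<bullet> (k *\<^sub>R x))) (at s)"
      by (rule has_derivative_compose[OF _ grad]) (auto intro!: derivative_eq_intros)
    then have "((\<lambda>s. U (s *\<^sub>R x)) has_real_derivative (G (s *\<^sub>R x) \<bullet> x)) (at s)"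
      unfolding has_field_derivative_def by (rule has_derivative_eq_rhs) (auto simp: fun_eq_iff)
    then have "((\<lambda>s. U (s *\<^sub>R x) - m * s^2 * (norm x)^2 / 2) has_real_derivative (G (s *\<^sub>R x) \<bullet> x - m * s * (norm x)^2)) (at s)"
      by (auto intro!: derivative_eq_intros simp: power2_eq_square)
    then show ?thesis by (simp add: h_def[abs_def])
  qed
  have "h t \<le> h 1"
  proof (rule DERIV_nonneg_imp_increasing_open[of t 1 h])
    show "t \<le> 1" using t by simp
    show "continuous_on {t..1} h"
      using der by (meson DERIV_continuous continuous_at_imp_continuous_on)
    fix s assume s: "t < s" "s < 1"
    have nx: "norm x > 0" using x R_pos t
      by (metis less_le_trans mult_zero_right norm_ge_zero norm_zero order_le_less)
    have "t * norm x < s * norm x" using s nx by (intro mult_strict_right_mono) auto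
    then have "norm (s *\<^sub>R x - 0) > R" using s t x by simp
    from convex_outside[OF this] have
      "m * (norm (s *\<^sub>R x))^2 \<le> G (s *\<^sub>R x) \<bullet> (s *\<^sub>R x)" by (simp add: G0)
    then have "s * (m * s * (norm x)^2) \<le> s * (G (s *\<^sub>R x) \<bullet> x)"
      using s t by (simp add: power2_eq_square algebra_simps)
    then have "m * s * (norm x)^2 \<le> G (s *\<^sub>R x) \<bullet> x" using s t by simp
    then show "\<exists>y. (h has_real_derivative y) (at s) \<and> 0 \<le> y" using der[of s] by (intro exI[of _ "G (s *\<^sub>R x) \<bullet> x - m * s * (norm x)^2"]) auto
  qed
  moreover have "m * (1 - t^2) / 2 * (norm x)^2 = m * 1^2 * (norm x)^2 / 2 - m * t^2 * (norm x)^2 / 2"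
    by (simp add: field_simps)
  ultimately show ?thesis unfolding h_def by (simp add: diff_divide_distrib)
qed


lemma nn_integral_scale':
  fixes g :: "'a::euclidean_space \<Rightarrow> ennreal"
  assumes [measurable]: "g \<in> borel_measurable borel" and c: "c > 0"
  shows "(\<integral>\<^sup>+x. g (c *\<^sub>R x) \<partial>lborel) = ennreal ((1/c)^DIM('a)) * (\<integral>\<^sup>+x. g x \<partial>lborel)"
proof -
  have "ennreal ((1/c)^DIM('a)) * (\<integral>\<^sup>+x. g x \<partial>lborel) = ennreal ((1/c)^DIM('a)) * ennreal (c^DIM('a)) * (\<integral>\<^sup>+x. g (c *\<^sub>R x) \<partial>lborel)"
    using nn_integral_scale[OF assms(1), of c] c by (simp add: mult.assoc)
  also have "ennreal ((1/c)^DIM('a)) * ennreal (c^DIM('a)) = 1"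
    using c by (simp add: ennreal_mult[symmetric] power_mult_distrib[symmetric])
  finally show ?thesis by simp
qed

lemma xexp_bound:
  fixes a y :: real
  assumes "a > 0" "y \<ge> 0"
  shows "y * exp (- a * y) \<le> exp (-1) / a"
proof -
  have "a * y \<le> exp (a * y - 1)" using exp_ge_add_one_self[of "a * y - 1"] by simp
  then have "a * y * exp (- a * y) \<le> exp (a * y - 1) * exp (- a * y)"
    by (intro mult_right_mono) auto
  also have "\<dots> = exp (-1)" by (simp add: exp_add[symmetric])
  finally have "a * (y * exp (- a * y)) \<le> exp (-1)" by (simp add: mult.assoc)
  then show ?thesis using assms by (simp add: field_simps)
qed

lemma exp1_ge: "8/3 \<le> exp (1::real)"
proof -
  have "(1 + 1 / real (30::nat)) ^ 30 \<le> exp (1::real)"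
    by (rule exp_ge_one_plus_x_over_n_power_n) auto
  moreover have "(8/3::real) \<le> (1 + 1 / real (30::nat)) ^ 30" by (simp add: power_divide)
  ultimately show ?thesis by linarith
qed


theorem lemma22:
  fixes U :: "'a::euclidean_space \<Rightarrow> real" and G :: "'a \<Rightarrow> 'a"
    and L m R :: real
  assumes grad: "\<And>x. (U has_derivative (\<lambda>h. G x \<bullet> h)) (at x)"
    and cont: "continuous_on UNIV G"
    and L_pos: "L > 0"
    and lip: "\<And>x y. norm (G x - G y) \<le> L * norm (x - y)"
    and G0: "G 0 = 0"
    and m_pos: "m > 0" and R_pos: "R > 0"
    and convex_outside: "\<And>x y. norm (x - y) > R \<Longrightarrow>
                 (G x - G y) \<bullet> (x - y) \<ge> m * (norm (x - y))^2"
  shows "prob_space (gibbs U) \<and> integrable (gibbs U) (\<lambda>x. (norm x)^2) \<and>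
         (\<integral>x. (norm x)^2 \<partial>gibbs U) \<le> 2 * real DIM('a) / m + 18 * R^2"
proof -
  define D where "D = DIM('a)"
  define d where "d = real D"
  have D1: "D \<ge> 1" unfolding D_def using DIM_positive by (simp add: Suc_leI)
  have d1: "d \<ge> 1" using D1 by (simp add: d_def)
  define t where "t = d / (d + 1)"
  have t0: "0 < t" and t1: "t < 1" using d1 by (auto simp: t_def field_simps)
  have tsq: "t^2 < 1" using t0 t1 by (simp add: power_less_one_iff)
  define a where "a = m * (1 - t^2) / 2"
  have a0: "a > 0" using tsq m_pos unfolding a_def by simp
  define \<rho> where "\<rho> = R / t"
  have rho_t: "t * \<rho> = R" using t0 by (simp add: \<rho>_def)
  have rho0: "\<rho> > 0" using t0 R_pos by (simp add: \<rho>_def)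
  define s where "s = (1/t)^D"
  have s0: "s > 0" using t0 by (simp add: s_def)
  define f where "f = (\<lambda>x. exp (- U x))"
  have Ucont: "continuous_on UNIV U"
    using grad has_derivative_continuous continuous_at_imp_continuous_on by blast
  have [measurable]: "U \<in> borel_measurable borel" by (rule borel_measurable_continuous_onI[OF Ucont])
  have fcont: "continuous_on UNIV f" unfolding f_def by (intro continuous_intros Ucont)
  have fmeas[measurable]: "f \<in> borel_measurable borel" unfolding f_def by measurable
  have cb[measurable]: "\<And>M. cball (0::'a) M \<in> sets borel" by (simp add: borel_closed)
  have fpos: "\<And>x. f x > 0" by (simp add: f_def)
  have fnn: "\<And>x. f x \<ge> 0" by (simp add: f_def)
  have key: "f x \<le> f (t *\<^sub>R x) * exp (- a * (norm x)^2)" if "R \<le> t * norm x" for x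
  proof -
    have "U (t *\<^sub>R x) + a * (norm x)^2 \<le> U x"
      using ray_bound[OF grad G0 R_pos convex_outside t0 t1 that] by (simp add: a_def)
    then have "- U x \<le> - U (t *\<^sub>R x) + (- a * (norm x)^2)" by simp
    then show ?thesis by (simp add: f_def exp_add[symmetric])
  qed
  have scale: "(\<integral>\<^sup>+x. g (t *\<^sub>R x) \<partial>lborel) = ennreal s * (\<integral>\<^sup>+x. g x \<partial>lborel)"
    if [measurable]: "g \<in> borel_measurable borel" for g :: "'a \<Rightarrow> ennreal"
    using nn_integral_scale'[OF that t0] by (simp add: s_def D_def)

  define I where "I M = (\<integral>\<^sup>+x. ennreal (f x * indicator (cball 0 M) x) \<partial>lborel)" for M
  define J where "J M = (\<integral>x. f x * indicator (cball 0 M) x \<partial>lborel)" for M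
  have intJ: "integrable lborel (\<lambda>x. f x * indicator (cball 0 M) x)" for M
    using borel_integrable_compact[OF compact_cball continuous_on_subset[OF fcont], of 0 M]
    by (simp add: mult.commute)
  have IJ: "I M = ennreal (J M)" for M
    unfolding I_def J_def by (rule nn_integral_eq_integral[OF intJ]) (auto simp: fnn)
  have J_mono: "J M1 \<le> J M2" if "M1 \<le> M2" for M1 M2
    unfolding J_def using that
    by (intro integral_mono[OF intJ intJ]) (auto simp: indicator_def fnn)
  have J_nn: "J M \<ge> 0" for M
    unfolding J_def by (intro integral_nonneg_AE) (auto simp: fnn)
  define r where "r = max \<rho> (sqrt (2 * s / a))"
  have r_rho: "\<rho> \<le> r" by (simp add: r_def)
  have c_half: "exp (- a * r^2) * s \<le> 1/2"
  proof -
    have "sqrt (2 * s / a) \<le> r" by (simp add: r_def)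
    then have "(sqrt (2 * s / a))^2 \<le> r^2" using s0 a0 by (intro power_mono) auto
    then have "2 * s / a \<le> r^2" using s0 a0 by simp
    then have "2 * s \<le> a * r^2" using a0 by (simp add: field_simps)
    also have "a * r^2 \<le> exp (a * r^2)" using exp_ge_add_one_self[of "a * r^2"] by linarith
    finally have "2 * s \<le> exp (a * r^2)" .
    then show ?thesis by (simp add: exp_minus field_simps)
  qed
  have Jbound: "J M \<le> 2 * J r" if M0: "M \<ge> 0" for M
  proof -
    define c where "c = exp (- a * r^2)"
    define g where "g w = ennreal (f w * indicator (cball 0 (t * M)) w)" for w
    have gm[measurable]: "g \<in> borel_measurable borel" unfolding g_def by measurable
    have pw: "f x * indicator (cball 0 M) x \<le> f x * indicator (cball 0 r) x + c * (f (t *\<^sub>R x) * indicator (cball 0 (t * M)) (t *\<^sub>R x))" for x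
    proof (cases "norm x \<le> r")
      case True
      then show ?thesis using fnn[of x] fnn[of "t *\<^sub>R x"]
        by (auto simp: indicator_def c_def)
    next
      case False
      have "t * \<rho> \<le> t * r" using r_rho t0 by (intro mult_left_mono) auto
      moreover have "t * r \<le> t * norm x" using False t0 by (intro mult_left_mono) auto
      ultimately have "R \<le> t * norm x" using rho_t by linarith
      from key[OF this] have "f x \<le> f (t *\<^sub>R x) * exp (- a * (norm x)^2)" .
      also have "\<dots> \<le> f (t *\<^sub>R x) * c" unfolding c_def
        using False a0 r_rho rho0 fnn[of "t *\<^sub>R x"]
        by (intro mult_left_mono) (auto intro!: power_mono)
      finally have fx: "f x \<le> c * f (t *\<^sub>R x)" by (simp add: mult.commute)
      have "(t *\<^sub>R x \<in> cball 0 (t * M)) = (x \<in> cball 0 M)" using t0 by simp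
      then show ?thesis using fx False fnn[of x] by (auto simp: indicator_def)
    qed
    have pwe: "ennreal (f x * indicator (cball 0 M) x) \<le> ennreal (f x * indicator (cball 0 r) x) + ennreal c * g (t *\<^sub>R x)" for x
    proof -
      have "ennreal (f x * indicator (cball 0 M) x) \<le> ennreal (f x * indicator (cball 0 r) x + c * (f (t *\<^sub>R x) * indicator (cball 0 (t * M)) (t *\<^sub>R x)))"
        by (rule ennreal_leI[OF pw])
      also have "\<dots> = ennreal (f x * indicator (cball 0 r) x) + ennreal c * g (t *\<^sub>R x)"
        unfolding g_def using fnn[of x] fnn[of "t *\<^sub>R x"]
        by (simp add: ennreal_plus ennreal_mult c_def)
      finally show ?thesis .
    qed
    have "I M \<le> (\<integral>\<^sup>+x. ennreal (f x * indicator (cball 0 r) x) + ennreal c * g (t *\<^sub>R x) \<partial>lborel)"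
      unfolding I_def by (rule nn_integral_mono[OF pwe])
    also have "\<dots> = I r + ennreal c * (\<integral>\<^sup>+x. g (t *\<^sub>R x) \<partial>lborel)"
      unfolding I_def by (subst nn_integral_add) (auto simp: nn_integral_cmult)
    also have "(\<integral>\<^sup>+x. g (t *\<^sub>R x) \<partial>lborel) = ennreal s * I (t * M)"
      using scale[OF gm] unfolding I_def g_def by simp
    finally have "ennreal (J M) \<le> ennreal (J r + c * (s * J (t * M)))"
      using J_nn[of "t * M"] J_nn[of r] less_imp_le[OF s0]
      by (simp add: IJ c_def ennreal_mult)
    then have "J M \<le> J r + c * (s * J (t * M))"
      using J_nn s0 by (subst (asm) ennreal_le_iff) (auto simp: c_def)
    also have "c * (s * J (t * M)) \<le> 1/2 * J M"
    proof -
      have "J (t * M) \<le> J M" using t1 t0 M0 by (intro J_mono) (simp add: mult_left_le_one_le)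
      then have "c * s * J (t * M) \<le> c * s * J M" using s0 by (intro mult_left_mono) (auto simp: c_def)
      also have "\<dots> \<le> 1/2 * J M" using c_half J_nn by (intro mult_right_mono) (auto simp: c_def)
      finally show ?thesis by (simp add: mult.assoc)
    qed
    finally show ?thesis by simp
  qed
  have Z'bound: "(\<integral>\<^sup>+x. ennreal (f x) \<partial>lborel) \<le> ennreal (2 * J r)"
  proof -
    have sup: "(SUP n. ennreal (f x * indicator (cball 0 (real n)) x)) = ennreal (f x)" for x
    proof (rule antisym)
      show "(SUP n. ennreal (f x * indicator (cball 0 (real n)) x)) \<le> ennreal (f x)"
        by (rule SUP_least) (auto simp: indicator_def fnn intro!: ennreal_leI)
      obtain n where "norm x \<le> real n" using real_arch_simple by blast
      then show "ennreal (f x) \<le> (SUP n. ennreal (f x * indicator (cball 0 (real n)) x))"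
        by (intro SUP_upper2[of n]) auto
    qed
    have "(\<integral>\<^sup>+x. ennreal (f x) \<partial>lborel) = (\<integral>\<^sup>+x. (SUP n. ennreal (f x * indicator (cball 0 (real n)) x)) \<partial>lborel)"
      by (simp add: sup)
    also have "\<dots> = (SUP n. I (real n))" unfolding I_def
      by (rule nn_integral_monotone_convergence_SUP)
         (auto simp: incseq_def le_fun_def indicator_def fnn intro!: ennreal_leI)
    also have "\<dots> \<le> ennreal (2 * J r)"
      by (rule SUP_least) (simp add: IJ Jbound ennreal_leI)
    finally show ?thesis .
  qed
  have intf: "integrable lborel f"
  proof (rule integrableI_bounded)
    show "f \<in> borel_measurable lborel" by measurable
    have "(\<integral>\<^sup>+x. ennreal (norm (f x)) \<partial>lborel) = (\<integral>\<^sup>+x. ennreal (f x) \<partial>lborel)" using fnn by simp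
    also have "\<dots> < \<infinity>" using Z'bound by (rule le_less_trans) simp
    finally show "(\<integral>\<^sup>+x. ennreal (norm (f x)) \<partial>lborel) < \<infinity>" .
  qed
  define Z where "Z = (\<integral>x. f x \<partial>lborel)"
  have Z'Z: "(\<integral>\<^sup>+x. ennreal (f x) \<partial>lborel) = ennreal Z"
    unfolding Z_def by (rule nn_integral_eq_integral[OF intf]) (auto simp: fnn)
  have Z0: "Z > 0"
  proof (rule ccontr)
    assume "\<not> Z > 0"
    moreover have "Z \<ge> 0" unfolding Z_def by (intro integral_nonneg_AE) (auto simp: fnn)
    ultimately have "Z = 0" by simp
    then have "(\<integral>\<^sup>+x. ennreal (f x) \<partial>lborel) = 0" using Z'Z by simp
    then have "AE x in lborel. ennreal (f x) = 0" by (subst (asm) nn_integral_0_iff_AE) auto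
    then obtain N where N: "{x \<in> space lborel. \<not> ennreal (f x) = 0} \<subseteq> N" "emeasure lborel N = 0" "N \<in> sets lborel"
      by (rule AE_E)
    have "ennreal (f x) \<noteq> 0" for x using fpos[of x] by simp
    then have "N = (UNIV :: 'a set)" using N(1) by auto
    then show False using N(2) by simp
  qed
  define K where "K = exp (-1) / a"
  have K0: "K > 0" using a0 by (simp add: K_def)
  have pw2: "(norm x)^2 * f x \<le> \<rho>^2 * f x + K * f (t *\<^sub>R x)" for x
  proof (cases "norm x \<le> \<rho>")
    case True
    then have "(norm x)^2 \<le> \<rho>^2" by (intro power_mono) auto
    then have "(norm x)^2 * f x \<le> \<rho>^2 * f x" using fnn[of x] by (intro mult_right_mono) auto
    then show ?thesis using K0 fnn[of "t *\<^sub>R x"] by (smt (verit) mult_nonneg_nonneg)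
  next
    case False
    then have "R \<le> t * norm x" using rho_t t0
      by (metis less_le_not_le linorder_linear mult_left_mono)
    from key[OF this] have "(norm x)^2 * f x \<le> (norm x)^2 * (f (t *\<^sub>R x) * exp (- a * (norm x)^2))"
      by (intro mult_left_mono) auto
    also have "\<dots> = f (t *\<^sub>R x) * ((norm x)^2 * exp (- a * (norm x)^2))" by simp
    also have "\<dots> \<le> f (t *\<^sub>R x) * K" unfolding K_def
      using xexp_bound[OF a0, of "(norm x)^2"] fnn[of "t *\<^sub>R x"] by (intro mult_left_mono) auto
    finally show ?thesis using fnn[of x] by (smt (verit) mult.commute mult_nonneg_nonneg zero_le_power2)
  qed
  have M2nn: "(\<integral>\<^sup>+x. ennreal ((norm x)^2 * f x) \<partial>lborel) \<le> ennreal ((\<rho>^2 + K * s) * Z)"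
  proof -
    have "(\<integral>\<^sup>+x. ennreal ((norm x)^2 * f x) \<partial>lborel) \<le> (\<integral>\<^sup>+x. ennreal (\<rho>^2) * ennreal (f x) + ennreal K * ennreal (f (t *\<^sub>R x)) \<partial>lborel)"
    proof (rule nn_integral_mono)
      fix x
      have "ennreal ((norm x)^2 * f x) \<le> ennreal (\<rho>^2 * f x + K * f (t *\<^sub>R x))"
        by (rule ennreal_leI[OF pw2])
      also have "\<dots> = ennreal (\<rho>^2) * ennreal (f x) + ennreal K * ennreal (f (t *\<^sub>R x))"
        using fnn[of x] fnn[of "t *\<^sub>R x"] less_imp_le[OF K0]
        by (simp add: ennreal_mult)
      finally show "ennreal ((norm x)^2 * f x) \<le> ennreal (\<rho>^2) * ennreal (f x) + ennreal K * ennreal (f (t *\<^sub>R x))" .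
    qed
    also have "\<dots> = ennreal (\<rho>^2) * (\<integral>\<^sup>+x. ennreal (f x) \<partial>lborel) + ennreal K * (\<integral>\<^sup>+x. ennreal (f (t *\<^sub>R x)) \<partial>lborel)"
      by (subst nn_integral_add) (auto simp: nn_integral_cmult)
    also have "(\<integral>\<^sup>+x. ennreal (f (t *\<^sub>R x)) \<partial>lborel) = ennreal s * ennreal Z"
      using scale[of "\<lambda>x. ennreal (f x)"] Z'Z by simp
    also have "ennreal (\<rho>^2) * (\<integral>\<^sup>+x. ennreal (f x) \<partial>lborel) + ennreal K * (ennreal s * ennreal Z) = ennreal ((\<rho>^2 + K * s) * Z)"
      using less_imp_le[OF K0] less_imp_le[OF s0] less_imp_le[OF Z0]
      by (simp add: Z'Z ennreal_mult distrib_right mult.assoc)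
    finally show ?thesis .
  qed
  have intM: "integrable lborel (\<lambda>x. (norm x)^2 * f x)"
  proof (rule integrableI_bounded)
    show "(\<lambda>x. (norm x)^2 * f x) \<in> borel_measurable lborel" by measurable
    have "(\<integral>\<^sup>+x. ennreal (norm ((norm x)^2 * f x)) \<partial>lborel) = (\<integral>\<^sup>+x. ennreal ((norm x)^2 * f x) \<partial>lborel)" using fnn by simp
    also have "\<dots> < \<infinity>" using M2nn by (rule le_less_trans) simp
    finally show "(\<integral>\<^sup>+x. ennreal (norm ((norm x)^2 * f x)) \<partial>lborel) < \<infinity>" .
  qed
  have Mbound: "(\<integral>x. (norm x)^2 * f x \<partial>lborel) \<le> (\<rho>^2 + K * s) * Z"
  proof -
    have "ennreal (\<integral>x. (norm x)^2 * f x \<partial>lborel) = (\<integral>\<^sup>+x. ennreal ((norm x)^2 * f x) \<partial>lborel)"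
      by (rule nn_integral_eq_integral[OF intM, symmetric]) (auto simp: fnn)
    with M2nn have "ennreal (\<integral>x. (norm x)^2 * f x \<partial>lborel) \<le> ennreal ((\<rho>^2 + K * s) * Z)" by simp
    then show ?thesis using K0 s0 Z0
      by (subst (asm) ennreal_le_iff) (auto intro!: mult_nonneg_nonneg add_nonneg_nonneg)
  qed
  have gibbs_eq: "gibbs U = density lborel (\<lambda>x. ennreal (f x / Z))"
    unfolding gibbs_def f_def Z_def ..
  have gnn: "AE x in lborel. 0 \<le> f x / Z" using Z0 fnn by (auto intro!: divide_nonneg_pos)
  have prob: "prob_space (gibbs U)"
  proof
    have "emeasure (gibbs U) (space (gibbs U)) = (\<integral>\<^sup>+x. ennreal (f x / Z) \<partial>lborel)"
      unfolding gibbs_eq by (simp add: emeasure_density)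
    also have "\<dots> = ennreal (\<integral>x. f x / Z \<partial>lborel)"
      by (rule nn_integral_eq_integral) (use intf gnn in auto)
    also have "(\<integral>x. f x / Z \<partial>lborel) = 1" using Z0 by (simp add: Z_def[symmetric])
    finally show "emeasure (gibbs U) (space (gibbs U)) = 1" by simp
  qed
  have inteq: "(\<lambda>x. (f x / Z) *\<^sub>R (norm x)^2) = (\<lambda>x. (norm x)^2 * f x / Z)"
    by (auto simp: fun_eq_iff)
  have dens_int: "integrable (density lborel (\<lambda>x. ennreal (f x / Z))) (\<lambda>x. (norm x)^2) \<longleftrightarrow> integrable lborel (\<lambda>x. (f x / Z) *\<^sub>R (norm x)^2)"
    by (rule integrable_density) (use gnn in auto)
  have int2: "integrable (gibbs U) (\<lambda>x. (norm x)^2)"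
    unfolding gibbs_eq dens_int inteq by (rule integrable_divide[OF intM])
  have "(\<integral>x. (norm x)^2 \<partial>gibbs U) = (\<integral>x. (f x / Z) *\<^sub>R (norm x)^2 \<partial>lborel)"
    unfolding gibbs_eq by (rule integral_density) (use gnn in auto)
  also have "\<dots> = (\<integral>x. (norm x)^2 * f x \<partial>lborel) / Z" unfolding inteq by simp
  also have "\<dots> \<le> \<rho>^2 + K * s" using Mbound Z0 by (simp add: divide_le_eq)
  also have "\<dots> \<le> 2 * real DIM('a) / m + 18 * R^2"
  proof -
    have "\<rho> \<le> 2 * R"
    proof -
      have "\<rho> = R * (d + 1) / d" using d1 by (simp add: \<rho>_def t_def)
      also have "\<dots> \<le> R * (2 * d) / d" using d1 R_pos
        by (intro divide_right_mono mult_left_mono) auto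
      finally show ?thesis using d1 by simp
    qed
    then have rho2: "\<rho>^2 \<le> 4 * R^2" using rho0 by (smt (verit) power_mono power_mult_distrib four_x_squared)
    have s_eq: "s = (1 + 1 / d)^D" using d1 by (simp add: s_def t_def field_simps)
    have dd: "0 \<le> d * d" by simp
    have hpos: "1 + (d * d + d * 2) \<noteq> 0" "d * d + d * 2 + 1 \<noteq> 0" "d * d + 2 * d + 1 \<noteq> 0" using d1 dd by linarith+
    have omt: "1 - t^2 = (2 * d + 1) / (d + 1)^2" using d1 hpos
      by (simp add: t_def field_simps power2_eq_square)
    have sbound: "s \<le> exp 1 * d * (1 - t^2)"
    proof (cases "D = 1")
      case True
      then have "d = 1" by (simp add: d_def)
      then show ?thesis using exp1_ge True by (simp add: s_eq omt)
    next
      case False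
      then have D2: "D \<ge> 2" using D1 by simp
      then have d2: "d \<ge> 2" by (simp add: d_def)
      have "(1 + 1 / real D)^D \<le> exp 1"
        by (rule exp_ge_one_plus_x_over_n_power_n) (use D1 in auto)
      then have "s \<le> exp 1" unfolding s_eq d_def by simp
      also have "exp 1 \<le> exp 1 * (d * (1 - t^2))"
      proof -
        have "2 * d \<le> d * d" using d2 by (intro mult_right_mono) auto
        moreover have "(d + 1)^2 = d * d + 2 * d + 1" by (simp add: power2_eq_square algebra_simps)
        moreover have "d * (2 * d + 1) = 2 * (d * d) + d" by (simp add: algebra_simps)
        ultimately have "(d + 1)^2 \<le> d * (2 * d + 1)" using d2 by linarith
        then have "1 \<le> d * (1 - t^2)" using d1 by (simp add: omt field_simps)
        then show ?thesis by simp
      qed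
      finally show ?thesis by (simp add: mult.assoc)
    qed
    have "K * s \<le> 2 * d / m"
    proof -
      have "K * s = 2 * exp (-1) * s / (m * (1 - t^2))" by (simp add: K_def a_def)
      also have "\<dots> \<le> 2 * exp (-1) * (exp 1 * d * (1 - t^2)) / (m * (1 - t^2))"
        using sbound m_pos tsq by (intro divide_right_mono mult_left_mono) auto
      also have "\<dots> = 2 * d / m" using tsq m_pos by (simp add: field_simps exp_minus)
      finally show ?thesis .
    qed
    then have "K * s \<le> 2 * real DIM('a) / m" by (simp add: d_def D_def)
    then show ?thesis using rho2 zero_le_power2[of R] by linarith
  qed
  finally show ?thesis using prob int2 by simp
qed

end
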